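(* Suppose $f$ is convex and $L_f$-smooth, $L_{\mathbf S}^{\max}<\infty$, $\tilde f$ has a minimizer $x^\star_{\mathcal D}$, and the gradient estimator satisfies the ABC conditions with constants $A,B,C\ge0$. Let $D_{A,B}=A+BL_fL_{\mathbf S}^{\max}$, $0<\gamma\le1/(2D_{A,B})$, $T\ge1$, and let $\bar x^T$ be chosen uniformly at random from the iterates $x^0,\dots,x^{T-1}$ of inexact Double Sketched SGD. Then $$\mathbb E\big[\tilde f(\bar x^T)-\tilde f^{\inf}\big]\le\frac{\|x^0-x^\star_{\mathcal D}\|^2}{\gamma T}+\gamma\Big(2\big(\tilde f^{\inf}-f^{\inf}\big)D_{A,B}+C\Big).$$
   Context: Let $f:\mathbb R^d\to\mathbb R$, fix $s\in\mathbb R^d$, and let $\mathcal D$ be a distribution of random matrices $\mathbf S\in\mathbb R^{d\times d}$ with $\mathbb E[\mathbf S]=I$ and $\mathbb E[\mathbf S^\top\mathbf S]$ finite. Define $f_{\mathbf S}(x)=f(s+\mathbf S(x-s))$, $f_{\mathbf S}^{\inf}=\inf_x f_{\mathbf S}(x)$, $\tilde f(x)=\mathbb E_{\mathbf S\sim\mathcal D}[f_{\mathbf S}(x)]$, $\tilde f^{\inf}=\inf_x\tilde f(x)$, and $L_{\mathbf S}^{\max}$ the smallest constant with $\lambda_{\max}(\mathbf S^\top\mathbf S)\le L_{\mathbf S}^{\max}$ a.s. For each $\mathbf S$ and $x$ let $g_{\mathbf S}(x)$ be a random vector satisfying the ABC conditions: $\mathbb E[g_{\mathbf S}(x)]=\nabla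 f_{\mathbf S}(x)$ and $\mathbb E\|g_{\mathbf S}(x)\|^2\le 2A(f_{\mathbf S}(x)-f_{\mathbf S}^{\inf})+B\|\nabla f_{\mathbf S}(x)\|^2+C$ for all $x$ (expectation over the estimator's randomness with $\mathbf S$ fixed). Inexact Double Sketched SGD: given $x^0$, for $t\ge0$ draw $\mathbf S^t\sim\mathcal D$ independently of the past and set $x^{t+1}=x^t-\gamma g_{\mathbf S^t}(x^t)$. $f$ is $L_f$-smooth if differentiable, $f(x+h)\le f(x)+\langle\nabla f(x),h\rangle+\frac{L_f}{2}\|h\|^2$ for all $x,h$, and bounded below by $f^{\inf}\in\mathbb R$. *)

theory Defs
  imports "HOL-Probability.Probability"
begin

definition grad :: "('a::real_inner \<Rightarrow> real) \<Rightarrow> 'a \<Rightarrow> 'a" where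
  "grad F x = (THE g. GDERIV F x :> g)"

definition lambda_max :: "real^'n^'n \<Rightarrow> real" where
  "lambda_max M = Max {l. \<exists>v. v \<noteq> 0 \<and> M *v v = l *\<^sub>R v}"

definition fS :: "(real^'n \<Rightarrow> real) \<Rightarrow> real^'n \<Rightarrow> real^'n^'n \<Rightarrow> real^'n \<Rightarrow> real" where
  "fS f s S x = f (s + S *v (x - s))"

definition ftilde :: "(real^'n \<Rightarrow> real) \<Rightarrow> real^'n \<Rightarrow> (real^'n^'n) measure \<Rightarrow> real^'n \<Rightarrow> real" where
  "ftilde f s D x = (\<integral>S. fS f s S x \<partial>D)"

definition LSmax :: "(real^'n^'n) measure \<Rightarrow> real" where
  "LSmax D = Inf {L. AE S in D. lambda_max (transpose S ** S) \<le> L}"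

text \<open>Distribution of the iterate x^t of inexact Double Sketched SGD:
  x^{t+1} = x^t - gamma g_{S^t}(x^t), with S^t ~ D drawn afresh, and the
  estimator g_S(x) distributed according to G S x.\<close>
primrec dssgd_iter ::
  "(real^'n^'n) measure \<Rightarrow> (real^'n^'n \<Rightarrow> real^'n \<Rightarrow> (real^'n) measure) \<Rightarrow> real
     \<Rightarrow> real^'n \<Rightarrow> nat \<Rightarrow> (real^'n) measure" where
  "dssgd_iter D G \<gamma> x0 0 = return borel x0"
| "dssgd_iter D G \<gamma> x0 (Suc t) =
     dssgd_iter D G \<gamma> x0 t \<bind>
       (\<lambda>x. D \<bind> (\<lambda>S. G S x \<bind> (\<lambda>g. return borel (x - \<gamma> *\<^sub>R g))))"

definition dssgd_avg ::
  "(real^'n^'n) measure \<Rightarrow> (real^'n^'n \<Rightarrow> real^'n \<Rightarrow> (real^'n) measure) \<Rightarrow> real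
     \<Rightarrow> real^'n \<Rightarrow> nat \<Rightarrow> (real^'n) measure" where
  "dssgd_avg D G \<gamma> x0 T = measure_pmf (pmf_of_set {..<T}) \<bind> (\<lambda>t. dssgd_iter D G \<gamma> x0 t)"

end

theory Submission
  imports Defs
begin


lemma gderiv_unique:
  assumes "GDERIV f x :> a" "GDERIV f x :> b" shows "a = b"
proof -
  have "(\<lambda>h. h \<bullet> a) = (\<lambda>h. h \<bullet> b)"
    using assms unfolding gderiv_def by (rule has_derivative_unique)
  then have "(a - b) \<bullet> a = (a - b) \<bullet> b" by metis
  then have "(a - b) \<bullet> (a - b) = 0" by (simp add: inner_diff_right)
  then show ?thesis by simp
qed

lemma gderiv_exists:
  fixes f :: "'a::euclidean_space \<Rightarrow> real"
  assumes "f differentiable (at x)" shows "\<exists>g. GDERIV f x :> g"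
proof -
  obtain F where F: "(f has_derivative F) (at x)" using assms unfolding differentiable_def by blast
  have lin: "linear F" using F has_derivative_linear by blast
  define g where "g = (\<Sum>b\<in>Basis. F b *\<^sub>R b)"
  have "F h = h \<bullet> g" for h
  proof -
    have "F h = F (\<Sum>b\<in>Basis. (h \<bullet> b) *\<^sub>R b)" by (simp add: euclidean_representation)
    also have "\<dots> = (\<Sum>b\<in>Basis. (h \<bullet> b) * F b)"
      using lin by (simp add: linear_sum linear_scale)
    also have "\<dots> = h \<bullet> g" unfolding g_def by (simp add: inner_sum_right mult.commute)
    finally show ?thesis .
  qed
  then have "F = (\<lambda>h. h \<bullet> g)" by auto
  then show ?thesis using F unfolding gderiv_def by blast
qed

lemma grad_correct:
  fixes f :: "'a::euclidean_space \<Rightarrow> real"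
  assumes "f differentiable (at x)" shows "GDERIV f x :> grad f x"
proof -
  obtain g where g: "GDERIV f x :> g" using gderiv_exists[OF assms] by blast
  have "grad f x = g" unfolding grad_def
    by (rule the_equality) (use g gderiv_unique in blast)+
  then show ?thesis using g by simp
qed

lemma grad_eq:
  assumes "GDERIV f x :> g" shows "grad f x = g"
  unfolding grad_def by (rule the_equality) (use assms gderiv_unique in blast)+

lemma convex_tangent:
  fixes h :: "'a::real_inner \<Rightarrow> real"
  assumes cv: "convex_on UNIV h" and d: "GDERIV h x :> w"
  shows "h x + w \<bullet> (z - x) \<le> h z"
proof -
  define d where "d = z - x"
  define \<psi> where "\<psi> t = h (x + t *\<^sub>R d)" for t :: real
  have cvp: "convex_on UNIV \<psi>"
  proof (rule convex_onI)
    fix t a b :: real assume t: "0 < t" "t < 1"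
    have "x + ((1 - t) * a + t * b) *\<^sub>R d = (1 - t) *\<^sub>R (x + a *\<^sub>R d) + t *\<^sub>R (x + b *\<^sub>R d)"
      by (simp add: algebra_simps)
    then show "\<psi> ((1 - t) *\<^sub>R a + t *\<^sub>R b) \<le> (1 - t) * \<psi> a + t * \<psi> b"
      unfolding \<psi>_def using convex_onD[OF cv, of t] t by simp
  qed simp
  have d1: "((\<lambda>t::real. x + t *\<^sub>R d) has_derivative (\<lambda>t. t *\<^sub>R d)) (at 0)"
    by (auto intro!: derivative_eq_intros)
  have d2: "(h has_derivative (\<lambda>v. v \<bullet> w)) (at (x + 0 *\<^sub>R d))"
    using d unfolding gderiv_def by simp
  have "(\<psi> has_derivative (\<lambda>t. (t *\<^sub>R d) \<bullet> w)) (at 0)"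
    unfolding \<psi>_def by (rule has_derivative_compose[OF d1 d2])
  moreover have "(\<lambda>t. (t *\<^sub>R d) \<bullet> w) = (*) (d \<bullet> w)" by (auto simp: fun_eq_iff)
  ultimately have "(\<psi> has_real_derivative (d \<bullet> w)) (at 0)"
    unfolding has_field_derivative_def by simp
  then have "(d \<bullet> w) * (1 - 0) \<le> \<psi> 1 - \<psi> 0"
    by (intro convex_on_imp_above_tangent[OF cvp]) auto
  then show ?thesis unfolding \<psi>_def d_def by (simp add: inner_commute)
qed

lemma sq_norm_mv: fixes S :: "real^'n^'n" shows "norm (S *v v) ^ 2 = v \<bullet> ((transpose S ** S) *v v)"
proof -
  have "v \<bullet> ((transpose S ** S) *v v) = v \<bullet> ((S *v v) v* S)"
    using matrix_vector_mul_assoc[of "transpose S" S, symmetric] transpose_matrix_vector[of S] by simp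
  also have "\<dots> = (S *v v) \<bullet> (S *v v)" by (subst inner_commute) (rule dot_lmul_matrix)
  finally show ?thesis by (simp add: power2_norm_eq_inner)
qed

lemma mv_sym: fixes S :: "real^'n^'n" shows "a \<bullet> ((transpose S ** S) *v b) = (S *v a) \<bullet> (S *v b)"
proof -
  have "a \<bullet> ((transpose S ** S) *v b) = a \<bullet> ((S *v b) v* S)"
    using matrix_vector_mul_assoc[of "transpose S" S, symmetric] transpose_matrix_vector[of S] by simp
  also have "\<dots> = (S *v b) \<bullet> (S *v a)" by (subst inner_commute) (rule dot_lmul_matrix)
  finally show ?thesis by (simp add: inner_commute)
qed




lemma mv_scale: fixes S :: "real^'n^'m" shows "S *v (c *\<^sub>R v) = c *\<^sub>R (S *v v)"
  by (simp add: scaleR_matrix_vector_assoc matrix_scaleR_vector_ac)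

lemma eig_finite:
  fixes S :: "real^'n^'n"
  defines "M \<equiv> transpose S ** S"
  shows "finite {l. \<exists>v. v \<noteq> 0 \<and> M *v v = l *\<^sub>R v}"
proof -
  define E where "E = {l. \<exists>v. v \<noteq> 0 \<and> M *v v = l *\<^sub>R v}"
  define vec where "vec l = (SOME v. v \<noteq> 0 \<and> M *v v = l *\<^sub>R v)" for l
  have vec: "vec l \<noteq> 0 \<and> M *v vec l = l *\<^sub>R vec l" if "l \<in> E" for l
    using that unfolding E_def vec_def by (metis (mono_tags, lifting) mem_Collect_eq someI)
  have orth: "vec l1 \<bullet> vec l2 = 0" if "l1 \<in> E" "l2 \<in> E" "l1 \<noteq> l2" for l1 l2
  proof -
    have "l1 * (vec l1 \<bullet> vec l2) = (M *v vec l1) \<bullet> vec l2" using vec[OF that(1)] by simp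
    also have "\<dots> = vec l2 \<bullet> (M *v vec l1)" by (simp add: inner_commute)
    also have "\<dots> = (S *v vec l2) \<bullet> (S *v vec l1)" unfolding M_def by (rule mv_sym)
    also have "\<dots> = vec l1 \<bullet> (M *v vec l2)" unfolding M_def by (simp add: mv_sym inner_commute)
    also have "\<dots> = l2 * (vec l1 \<bullet> vec l2)" using vec[OF that(2)] by simp
    finally have "(l1 - l2) * (vec l1 \<bullet> vec l2) = 0" by (simp add: algebra_simps)
    then show ?thesis using that(3) by simp
  qed
  have inj: "inj_on vec E"
  proof (rule inj_onI)
    fix a b assume ab: "a \<in> E" "b \<in> E" "vec a = vec b"
    show "a = b"
    proof (rule ccontr)
      assume "a \<noteq> b"
      then have "vec a \<bullet> vec a = 0" using orth[OF ab(1,2)] ab(3) by simp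
      then show False using vec[OF ab(1)] by simp
    qed
  qed
  have "pairwise orthogonal (vec ` E)"
    unfolding pairwise_def orthogonal_def using orth by fastforce
  moreover have "0 \<notin> vec ` E" using vec by fastforce
  ultimately have "independent (vec ` E)" by (rule pairwise_orthogonal_independent)
  then have "finite (vec ` E)" using independent_bound by blast
  then have "finite E" using inj finite_imageD by blast
  then show ?thesis unfolding E_def .
qed

lemma rayleigh:
  fixes S :: "real^'n^'n"
  shows "lambda_max (transpose S ** S) \<ge> 0 \<and>
         (\<forall>v. norm (S *v v) ^ 2 \<le> lambda_max (transpose S ** S) * norm v ^ 2)"
proof -
  define M where "M = transpose S ** S"
  define q where "q v = (S *v v) \<bullet> (S *v v)" for v
  have cq: "continuous_on UNIV q" unfolding q_def
    by (intro continuous_intros matrix_vector_mult_linear_continuous_on)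
  obtain b :: "real^'n" where b: "b \<in> Basis" using nonempty_Basis by blast
  have ne: "sphere (0::real^'n) 1 \<noteq> {}" using b by (auto intro!: exI[of _ b])
  obtain w0 where w0: "w0 \<in> sphere 0 1" "\<And>y. y \<in> sphere 0 1 \<Longrightarrow> q y \<le> q w0"
    using continuous_attains_sup[OF compact_sphere ne continuous_on_subset[OF cq]] by blast
  define \<mu> where "\<mu> = q w0"
  have nw0: "norm w0 = 1" using w0(1) by simp
  have qscale: "q (c *\<^sub>R v) = c^2 * q v" for c v
    unfolding q_def by (simp add: mv_scale power2_eq_square)
  have qle: "q v \<le> \<mu> * norm v ^ 2" for v
  proof (cases "v = 0")
    case True then show ?thesis by (simp add: q_def)
  next
    case False
    have "q ((1 / norm v) *\<^sub>R v) \<le> \<mu>" unfolding \<mu>_def using False by (intro w0(2)) simp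
    then have "q v / (norm v)^2 \<le> \<mu>" using qscale[of "1/norm v" v] by (simp add: power_divide)
    then show ?thesis using False by (simp add: divide_le_eq mult.commute)
  qed
  define Bf where "Bf a c = \<mu> * (a \<bullet> c) - (S *v a) \<bullet> (S *v c)" for a c
  have Bpos: "Bf a a \<ge> 0" for a
    using qle[of a] unfolding Bf_def q_def by (simp add: power2_norm_eq_inner)
  have B0: "Bf w0 w0 = 0" unfolding Bf_def \<mu>_def q_def using nw0
    by (simp add: power2_norm_eq_inner[symmetric])
  have Bexp: "Bf (w0 + t *\<^sub>R v) (w0 + t *\<^sub>R v) = 2 * t * Bf w0 v + t^2 * Bf v v" for t v
    unfolding Bf_def using B0[unfolded Bf_def]
    by (simp add: inner_add_left inner_add_right matrix_vector_right_distrib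
         mv_scale algebra_simps power2_eq_square inner_commute)
  have Bz: "Bf w0 v = 0" for v
  proof (rule ccontr)
    assume ne0: "Bf w0 v \<noteq> 0"
    define \<beta> where "\<beta> = Bf w0 v"
    define c where "c = Bf v v"
    have c0: "c \<ge> 0" unfolding c_def by (rule Bpos)
    define t where "t = - \<beta> / (c + 1)"
    have h0: "0 \<le> 2 * t * \<beta> + t^2 * c" using Bpos[of "w0 + t *\<^sub>R v"] Bexp[of t v]
      unfolding \<beta>_def c_def by simp
    have k0: "c + 1 > 0" using c0 by simp
    have "(c + 1)^2 * (2 * t * \<beta> + t^2 * c) = - (\<beta>^2 * (c + 2))"
    proof -
      have kt: "(c + 1) * t = - \<beta>" unfolding t_def using k0 by simp
      have "(c + 1)^2 * (2 * t * \<beta> + t^2 * c) = 2 * \<beta> * (c + 1) * ((c + 1) * t) + ((c + 1) * t)^2 * c"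
        by (simp add: power2_eq_square algebra_simps)
      also have "\<dots> = - (\<beta>^2 * (c + 2))" unfolding kt by (simp add: power2_eq_square algebra_simps)
      finally show ?thesis .
    qed
    moreover have "0 \<le> (c + 1)^2 * (2 * t * \<beta> + t^2 * c)" using h0 by simp
    moreover have "\<beta>^2 * (c + 2) > 0" using ne0 c0 unfolding \<beta>_def by simp
    ultimately show False by linarith
  qed
  have eig: "M *v w0 = \<mu> *\<^sub>R w0"
  proof -
    define r where "r = \<mu> *\<^sub>R w0 - M *v w0"
    have "r \<bullet> r = \<mu> * (w0 \<bullet> r) - (M *v w0) \<bullet> r"
      by (subst (1) r_def) (simp add: inner_diff_left)
    also have "(M *v w0) \<bullet> r = (S *v w0) \<bullet> (S *v r)"
      using mv_sym[of r S w0] unfolding M_def by (simp add: inner_commute)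
    finally have "r \<bullet> r = Bf w0 r" unfolding Bf_def .
    then have "r \<bullet> r = 0" using Bz by simp
    then show ?thesis unfolding r_def by simp
  qed
  have w0ne: "w0 \<noteq> 0" using nw0 by auto
  have fin: "finite {l. \<exists>v. v \<noteq> 0 \<and> M *v v = l *\<^sub>R v}" unfolding M_def by (rule eig_finite)
  have "\<mu> \<in> {l. \<exists>v. v \<noteq> 0 \<and> M *v v = l *\<^sub>R v}" using eig w0ne by blast
  then have mule: "\<mu> \<le> lambda_max M" unfolding lambda_max_def using fin by (rule Max_ge[rotated])
  have mu0: "\<mu> \<ge> 0" unfolding \<mu>_def q_def by simp
  have "norm (S *v v) ^ 2 \<le> lambda_max M * norm v ^ 2" for v
  proof -
    have "norm (S *v v) ^ 2 = q v" unfolding q_def by (simp add: power2_norm_eq_inner)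
    also have "\<dots> \<le> \<mu> * norm v ^ 2" by (rule qle)
    also have "\<dots> \<le> lambda_max M * norm v ^ 2" using mule by (simp add: mult_right_mono)
    finally show ?thesis .
  qed
  then show ?thesis using mule mu0 unfolding M_def by auto
qed




lemma quad_lemma:
  fixes K a m F :: real
  assumes K: "K \<ge> 0" and a: "a \<ge> 0" and mF: "m \<le> F"
    and H: "\<And>t. t \<ge> 0 \<Longrightarrow> m \<le> F - t * a + K * t^2 * a / 2"
  shows "a \<le> 2 * K * (F - m)"
proof (cases "K = 0")
  case True
  show ?thesis
  proof (rule ccontr)
    assume "\<not> ?thesis"
    then have ap: "a > 0" using True by simp
    have "m \<le> F - ((F - m + 1) / a) * a" using H[of "(F - m + 1) / a"] True ap mF by simp
    then show False using ap by simp
  qed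
next
  case False
  then have Kp: "K > 0" using K by simp
  have "m \<le> F - (1/K) * a + K * (1/K)^2 * a / 2" using H[of "1/K"] Kp by simp
  also have "K * (1/K)^2 * a / 2 = a / (2 * K)" using Kp by (simp add: power2_eq_square)
  finally have "m \<le> F - a / K + a / (2 * K)" by simp
  then have "a / (2 * K) \<le> F - m" by (simp add: field_simps)
  then show ?thesis using Kp by (simp add: field_simps)
qed

lemma aff_deriv:
  fixes S :: "real^'n^'n"
  shows "((\<lambda>z. s + S *v (z - s)) has_derivative (\<lambda>h. S *v h)) (at x)"
proof -
  have "((\<lambda>z. S *v z + (s - S *v s)) has_derivative (\<lambda>h. S *v h)) (at x)"
    by (intro has_derivative_add_const bounded_linear_imp_has_derivative matrix_vector_mul_bounded_linear)
  moreover have "(\<lambda>z. S *v z + (s - S *v s)) = (\<lambda>z. s + S *v (z - s))"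
    by (auto simp: fun_eq_iff matrix_vector_mult_diff_distrib)
  ultimately show ?thesis by simp
qed

lemma dot_transpose: fixes S :: "real^'n^'n" shows "h \<bullet> (transpose S *v g) = g \<bullet> (S *v h)"
proof -
  have "h \<bullet> (transpose S *v g) = h \<bullet> (g v* S)" by (simp only: transpose_matrix_vector)
  also have "\<dots> = g \<bullet> (S *v h)" by (subst inner_commute) (rule dot_lmul_matrix)
  finally show ?thesis .
qed

lemma dot_transpose2: fixes S :: "real^'n^'n" shows "h \<bullet> (g v* S) = g \<bullet> (S *v h)"
  by (subst inner_commute) (rule dot_lmul_matrix)

lemma fS_gderiv:
  fixes f :: "real^'n \<Rightarrow> real" and S :: "real^'n^'n"
  assumes d: "\<And>y. f differentiable (at y)"
  shows "GDERIV (fS f s S) x :> transpose S *v grad f (s + S *v (x - s))"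
proof -
  define y where "y = s + S *v (x - s)"
  have gf: "(f has_derivative (\<lambda>h. h \<bullet> grad f y)) (at ((\<lambda>z. s + S *v (z - s)) x))"
    using grad_correct[OF d[of y]] unfolding gderiv_def y_def by simp
  have "((\<lambda>z. f (s + S *v (z - s))) has_derivative (\<lambda>h. (S *v h) \<bullet> grad f y)) (at x)"
    by (rule has_derivative_compose[OF aff_deriv gf])
  moreover have "(\<lambda>h. (S *v h) \<bullet> grad f y) = (\<lambda>h. h \<bullet> (transpose S *v grad f y))"
    by (auto simp: fun_eq_iff dot_transpose2 inner_commute)
  ultimately show ?thesis unfolding gderiv_def fS_def y_def [symmetric] by (simp add: fun_eq_iff)
qed

lemma fS_grad:
  fixes f :: "real^'n \<Rightarrow> real" and S :: "real^'n^'n"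
  assumes d: "\<And>y. f differentiable (at y)"
  shows "grad (fS f s S) x = transpose S *v grad f (s + S *v (x - s))"
  by (rule grad_eq[OF fS_gderiv[OF d]])

lemma fS_convex:
  fixes f :: "real^'n \<Rightarrow> real" and S :: "real^'n^'n"
  assumes cv: "convex_on UNIV f"
  shows "convex_on UNIV (fS f s S)"
proof (rule convex_onI)
  fix t :: real and a b :: "real^'n" assume t: "0 < t" "t < 1"
  have "s + S *v ((1 - t) *\<^sub>R a + t *\<^sub>R b - s) = (1 - t) *\<^sub>R (s + S *v (a - s)) + t *\<^sub>R (s + S *v (b - s))"
    by (simp add: matrix_vector_right_distrib matrix_vector_mult_diff_distrib mv_scale algebra_simps)
  then show "fS f s S ((1 - t) *\<^sub>R a + t *\<^sub>R b) \<le> (1 - t) * fS f s S a + t * fS f s S b"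
    unfolding fS_def using convex_onD[OF cv, of t] t by simp
qed simp

lemma Lf_nonneg:
  fixes f :: "real^'n \<Rightarrow> real"
  assumes cv: "convex_on UNIV f" and d: "\<And>y. f differentiable (at y)"
    and sm: "\<And>x h. f (x + h) \<le> f x + grad f x \<bullet> h + Lf / 2 * norm h ^ 2"
  shows "Lf \<ge> 0"
proof -
  obtain b :: "real^'n" where b: "b \<in> Basis" using nonempty_Basis by blast
  have "f 0 + grad f 0 \<bullet> (b - 0) \<le> f b" by (rule convex_tangent[OF cv grad_correct[OF d]])
  moreover have "f (0 + b) \<le> f 0 + grad f 0 \<bullet> b + Lf / 2 * norm b ^ 2" by (rule sm)
  ultimately show ?thesis using b by simp
qed

lemma grad_sq_bound:
  fixes f :: "real^'n \<Rightarrow> real" and S :: "real^'n^'n"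
  assumes d: "\<And>y. f differentiable (at y)"
    and sm: "\<And>x h. f (x + h) \<le> f x + grad f x \<bullet> h + Lf / 2 * norm h ^ 2"
    and Lf: "Lf \<ge> 0" and L: "L \<ge> 0" and SL: "\<And>h. norm (S *v h) ^ 2 \<le> L * norm h ^ 2"
    and m: "\<And>z. m \<le> f z"
  shows "norm (grad (fS f s S) x) ^ 2 \<le> 2 * (Lf * L) * (fS f s S x - m)"
proof -
  define y where "y = s + S *v (x - s)"
  define g where "g = grad f y"
  define w where "w = grad (fS f s S) x"
  have w: "w = transpose S *v g" unfolding w_def g_def y_def by (rule fS_grad[OF d])
  show ?thesis unfolding w_def[symmetric]
  proof (rule quad_lemma)
    show "0 \<le> Lf * L" using Lf L by simp
    show "0 \<le> (norm w)^2" by simp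
    show "m \<le> fS f s S x" unfolding fS_def by (rule m)
    fix t :: real assume t: "t \<ge> 0"
    define h where "h = - t *\<^sub>R w"
    have yh: "s + S *v (x + h - s) = y + S *v h"
      unfolding y_def by (simp add: matrix_vector_right_distrib matrix_vector_mult_diff_distrib algebra_simps)
    have "m \<le> f (y + S *v h)" by (rule m)
    also have "\<dots> \<le> f y + g \<bullet> (S *v h) + Lf / 2 * norm (S *v h) ^ 2" unfolding g_def by (rule sm)
    also have "g \<bullet> (S *v h) = h \<bullet> w" unfolding w by (simp add: dot_transpose2)
    also have "h \<bullet> w = - t * norm w ^ 2" unfolding h_def by (simp add: power2_norm_eq_inner)
    also have "Lf / 2 * norm (S *v h) ^ 2 \<le> Lf / 2 * (L * norm h ^ 2)"
      using SL[of h] Lf by (simp add: mult_left_mono)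
    also have "norm h ^ 2 = t^2 * norm w ^ 2" unfolding h_def using t by (simp add: power_mult_distrib)
    finally show "m \<le> fS f s S x - t * (norm w)^2 + Lf * L * t^2 * (norm w)^2 / 2"
      unfolding fS_def y_def by (simp add: algebra_simps)
  qed
qed




lemma LSmax_props:
  fixes D :: "(real^'n^'n) measure"
  assumes P: "prob_space D" and fin: "\<exists>L. AE S in D. lambda_max (transpose S ** S) \<le> L"
  shows "LSmax D \<ge> 0 \<and> (AE S in D. \<forall>h. norm (S *v h) ^ 2 \<le> LSmax D * norm h ^ 2)"
proof -
  define lam where "lam S = lambda_max (transpose S ** S)" for S :: "real^'n^'n"
  define U where "U = {L. AE S in D. lam S \<le> L}"
  have U_ne: "U \<noteq> {}" using fin unfolding U_def lam_def by blast
  have U_ge: "L \<ge> 0" if "L \<in> U" for L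
  proof (rule ccontr)
    assume "\<not> L \<ge> 0"
    moreover have l0: "0 \<le> lam S" for S using rayleigh[of S] unfolding lam_def by blast
    ultimately have "AE S in D. False"
      using that unfolding U_def by (auto elim!: eventually_mono intro: order_trans[OF l0])
    then show False using P prob_space.AE_False by blast
  qed
  have LS: "LSmax D = Inf U" unfolding LSmax_def U_def lam_def by simp
  have nn: "Inf U \<ge> 0" using U_ne U_ge by (intro cInf_greatest) auto
  have "AE S in D. lam S \<le> Inf U + 1 / Suc n" for n :: nat
  proof -
    have "Inf U < Inf U + 1 / Suc n" by simp
    then obtain L where L: "L \<in> U" "L < Inf U + 1 / Suc n" using cInf_lessD[OF U_ne] by blast
    then show ?thesis unfolding U_def by (auto elim!: eventually_mono)
  qed
  then have "AE S in D. \<forall>n::nat. lam S \<le> Inf U + 1 / Suc n" by (simp add: AE_all_countable)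
  then have ae: "AE S in D. lam S \<le> Inf U"
  proof (rule eventually_mono)
    fix S assume H: "\<forall>n::nat. lam S \<le> Inf U + 1 / Suc n"
    show "lam S \<le> Inf U"
    proof (rule ccontr)
      assume "\<not> lam S \<le> Inf U"
      then have "lam S - Inf U > 0" by simp
      then obtain n :: nat where n: "n > 0" "inverse (real n) < lam S - Inf U"
        using ex_inverse_of_nat_less by blast
      have "1 / real (Suc n) \<le> inverse (real n)" using n(1) by (simp add: field_simps)
      then show False using H[rule_format, of n] n(2) by simp
    qed
  qed
  have "AE S in D. \<forall>h. norm (S *v h) ^ 2 \<le> LSmax D * norm h ^ 2"
  proof (rule eventually_mono[OF ae])
    fix S assume "lam S \<le> Inf U"
    then show "\<forall>h. norm (S *v h) ^ 2 \<le> LSmax D * norm h ^ 2"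
      using rayleigh[of S] unfolding LS lam_def
      by (meson mult_right_mono order_trans zero_le_power2)
  qed
  then show ?thesis using nn LS by simp
qed




lemma cont_mv_pair: "continuous_on UNIV (\<lambda>p::((real^'n) \<times> (real^'n^'n)). snd p *v fst p)"
  unfolding matrix_vector_mult_def
  by (intro continuous_on_vec_lambda continuous_intros)

lemma cont_mv_mat: "continuous_on UNIV (\<lambda>S::real^'n^'n. S *v v)"
  unfolding matrix_vector_mult_def
  by (intro continuous_on_vec_lambda continuous_intros)

lemma le_1_sq: "(a::real) \<le> 1 + a^2"
proof -
  have "0 \<le> (a - 1/2)^2" by simp
  then show ?thesis by (simp add: power2_eq_square algebra_simps)
qed

locale dss =
  fixes f :: "real^'n \<Rightarrow> real"
    and s xstar :: "real^'n"
    and D :: "(real^'n^'n) measure"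
    and G :: "real^'n^'n \<Rightarrow> real^'n \<Rightarrow> (real^'n) measure"
    and Lf A B C \<gamma> :: real
  assumes D_prob: "prob_space D"
    and D_sets: "sets D = sets borel"
    and LSmax_fin: "\<exists>L. AE S in D. lambda_max (transpose S ** S) \<le> L"
    and f_convex: "convex_on UNIV f"
    and f_diff: "\<And>x. f differentiable (at x)"
    and f_smooth: "\<And>x h. f (x + h) \<le> f x + grad f x \<bullet> h + Lf / 2 * norm h ^ 2"
    and f_bdd: "bdd_below (range f)"
    and xstar_min: "\<And>x. ftilde f s D xstar \<le> ftilde f s D x"
    and G_prob: "\<And>S x. prob_space (G S x)"
    and G_sets: "\<And>S x. sets (G S x) = sets borel"
    and G_meas: "(\<lambda>(S, x). G S x) \<in> borel \<Otimes>\<^sub>M borel \<rightarrow>\<^sub>M subprob_algebra borel"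
    and ABC_unbiased: "\<And>S x. integrable (G S x) (\<lambda>g. g) \<and>
                          (\<integral>g. g \<partial>G S x) = grad (fS f s S) x"
    and ABC_second: "\<And>S x. (\<integral>\<^sup>+g. ennreal (norm g ^ 2) \<partial>G S x)
          \<le> ennreal (2 * A * (fS f s S x - (INF y. fS f s S y))
                     + B * norm (grad (fS f s S) x) ^ 2 + C)"
    and A_nn: "A \<ge> 0" and B_nn: "B \<ge> 0" and C_nn: "C \<ge> 0"
    and gamma_pos: "\<gamma> > 0"
    and gamma_le: "2 * \<gamma> * (A + B * Lf * LSmax D) \<le> 1"
begin

definition finf where "finf = (INF y. f y)"
definition Dab where "Dab = A + B * Lf * LSmax D"
definition K where "K x = D \<bind> (\<lambda>S. G S x \<bind> (\<lambda>g. return borel (x - \<gamma> *\<^sub>R g)))"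

lemma f_ge: "finf \<le> f z"
  unfolding finf_def using f_bdd by (rule cINF_lower) simp

lemma fS_ge: "finf \<le> (INF y. fS f s S y)"
  by (rule cINF_greatest) (auto simp: fS_def f_ge)

lemma f_cont: "continuous_on UNIV f"
  using f_diff by (simp add: continuous_at_imp_continuous_on differentiable_imp_continuous_within)

lemma Lf_nn: "Lf \<ge> 0" by (rule Lf_nonneg[OF f_convex f_diff f_smooth])

lemma LS_nn: "LSmax D \<ge> 0" and AE_SL: "AE S in D. \<forall>h. norm (S *v h) ^ 2 \<le> LSmax D * norm h ^ 2"
  using LSmax_props[OF D_prob LSmax_fin] by auto

lemma Dab_nn: "Dab \<ge> 0" unfolding Dab_def using A_nn B_nn Lf_nn LS_nn by simp

lemma fS_meas: "(\<lambda>S. fS f s S x) \<in> borel_measurable D"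
proof -
  have "continuous_on UNIV (\<lambda>S::real^'n^'n. f (s + S *v (x - s)))"
    by (rule continuous_on_compose2[OF f_cont]) (auto intro!: continuous_intros cont_mv_mat)
  then have "(\<lambda>S. fS f s S x) \<in> borel_measurable borel"
    unfolding fS_def by (rule borel_measurable_continuous_onI)
  then show ?thesis by (subst measurable_cong_sets[OF D_sets refl])
qed

lemma fS_int: "integrable D (\<lambda>S. fS f s S x)"
proof -
  interpret P: prob_space D by (rule D_prob)
  define v where "v = x - s"
  define L where "L = LSmax D"
  define c where "c = \<bar>finf\<bar> + \<bar>f s\<bar> + norm (grad f s) * (1 + L * norm v ^ 2) + Lf / 2 * (L * norm v ^ 2)"
  have "AE S in D. norm (fS f s S x) \<le> c"
  proof (rule eventually_mono[OF AE_SL])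
    fix S :: "real^'n^'n" assume SL: "\<forall>h. norm (S *v h) ^ 2 \<le> LSmax D * norm h ^ 2"
    have lo: "finf \<le> fS f s S x" unfolding fS_def by (rule f_ge)
    define n where "n = norm (S *v v)"
    have h1: "fS f s S x \<le> f s + grad f s \<bullet> (S *v v) + Lf / 2 * n ^ 2"
      unfolding fS_def v_def n_def by (rule f_smooth)
    have h2: "grad f s \<bullet> (S *v v) \<le> norm (grad f s) * n" unfolding n_def by (rule norm_cauchy_schwarz)
    have h3: "n \<le> 1 + n ^ 2" by (rule le_1_sq)
    have h4: "n ^ 2 \<le> L * norm v ^ 2" using SL unfolding L_def n_def by blast
    have h5: "norm (grad f s) * n \<le> norm (grad f s) * (1 + L * norm v ^ 2)"
      using h3 h4 by (intro mult_left_mono) auto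
    have h6: "Lf / 2 * n ^ 2 \<le> Lf / 2 * (L * norm v ^ 2)" using h4 Lf_nn by (intro mult_left_mono) auto
    have "fS f s S x \<le> f s + norm (grad f s) * (1 + L * norm v ^ 2) + Lf / 2 * (L * norm v ^ 2)"
      using h1 h2 h5 h6 by linarith
    moreover have p1: "0 \<le> norm (grad f s) * (1 + L * norm v ^ 2)" using LS_nn unfolding L_def by simp
    moreover have p2: "0 \<le> Lf / 2 * (L * norm v ^ 2)" using LS_nn Lf_nn unfolding L_def by simp
    ultimately have u: "fS f s S x \<le> c" unfolding c_def
      using abs_ge_self[of "f s"] abs_ge_self[of finf] by linarith
    have l: "- c \<le> fS f s S x" unfolding c_def
      using lo p1 p2 abs_ge_minus_self[of "f s"] abs_ge_minus_self[of finf] by linarith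
    show "norm (fS f s S x) \<le> c" using u l by (simp add: abs_le_iff)
  qed
  then show ?thesis
    by (intro P.integrable_const_bound fS_meas)
qed

end


context dss begin

lemma ftilde_meas: "ftilde f s D \<in> borel_measurable borel"
proof -
  interpret P: prob_space D by (rule D_prob)
  have c: "continuous_on UNIV (\<lambda>p::((real^'n) \<times> (real^'n^'n)). f (s + snd p *v (fst p - s)))"
  proof (rule continuous_on_compose2[OF f_cont])
    have "continuous_on UNIV (\<lambda>p::((real^'n) \<times> (real^'n^'n)). snd (fst p - s, snd p) *v fst (fst p - s, snd p))"
      by (rule continuous_on_compose2[OF cont_mv_pair]) (auto intro!: continuous_intros)
    then show "continuous_on UNIV (\<lambda>p::((real^'n) \<times> (real^'n^'n)). s + snd p *v (fst p - s))"
      by (auto intro!: continuous_intros)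
  qed auto
  have "(\<lambda>p::((real^'n) \<times> (real^'n^'n)). f (s + snd p *v (fst p - s))) \<in> borel_measurable borel"
    by (rule borel_measurable_continuous_onI[OF c])
  then have "(\<lambda>p::((real^'n) \<times> (real^'n^'n)). f (s + snd p *v (fst p - s))) \<in> borel_measurable (borel \<Otimes>\<^sub>M D)"
    by (subst measurable_cong_sets[OF sets_pair_measure_cong[OF refl D_sets] refl]) (simp add: borel_prod)
  then have "(\<lambda>x. \<integral>S. f (s + S *v (x - s)) \<partial>D) \<in> borel_measurable borel"
    by (intro P.borel_measurable_lebesgue_integral) (simp add: case_prod_beta')
  then show ?thesis unfolding ftilde_def fS_def by simp
qed

lemma D_space: "D \<in> space (prob_algebra borel)"
  using D_prob D_sets by (simp add: space_prob_algebra)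

lemma G_pmeas: "(\<lambda>(S, x). G S x) \<in> borel \<Otimes>\<^sub>M borel \<rightarrow>\<^sub>M prob_algebra borel"
  by (rule measurable_prob_algebraI) (auto simp: G_prob G_meas split: prod.splits)

lemma G_pmeas2: "(\<lambda>p. G (snd p) (fst p)) \<in> borel \<Otimes>\<^sub>M borel \<rightarrow>\<^sub>M prob_algebra borel"
proof -
  have "(\<lambda>p. (snd p, fst p)) \<in> (borel::(real^'n) measure) \<Otimes>\<^sub>M (borel::(real^'n^'n) measure) \<rightarrow>\<^sub>M borel \<Otimes>\<^sub>M borel"
    by measurable
  from measurable_compose[OF this G_pmeas] show ?thesis by simp
qed

lemma G_x_meas: "(\<lambda>S. G S x) \<in> D \<rightarrow>\<^sub>M prob_algebra borel"
proof -
  have "(\<lambda>S. (S, x)) \<in> (borel::(real^'n^'n) measure) \<rightarrow>\<^sub>M borel \<Otimes>\<^sub>M (borel::(real^'n) measure)"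
    by measurable
  from measurable_compose[OF this G_pmeas] have "(\<lambda>S. G S x) \<in> borel \<rightarrow>\<^sub>M prob_algebra borel" by simp
  then show ?thesis by (subst measurable_cong_sets[OF D_sets refl])
qed

lemma K_meas: "K \<in> borel \<rightarrow>\<^sub>M prob_algebra borel"
proof -
  have ret: "(\<lambda>p. return borel (fst (fst p) - \<gamma> *\<^sub>R snd p))
     \<in> ((borel::(real^'n) measure) \<Otimes>\<^sub>M (borel::(real^'n^'n) measure)) \<Otimes>\<^sub>M (borel::(real^'n) measure) \<rightarrow>\<^sub>M prob_algebra borel"
    by measurable
  have inner: "(\<lambda>p. G (snd p) (fst p) \<bind> (\<lambda>g. return borel (fst p - \<gamma> *\<^sub>R g)))
      \<in> (borel::(real^'n) measure) \<Otimes>\<^sub>M (borel::(real^'n^'n) measure) \<rightarrow>\<^sub>M prob_algebra borel"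
    by (rule measurable_bind_prob_space2[OF G_pmeas2]) (use ret in \<open>simp add: case_prod_beta'\<close>)
  have "(\<lambda>x. D \<bind> (\<lambda>S. G S x \<bind> (\<lambda>g. return borel (x - \<gamma> *\<^sub>R g)))) \<in> borel \<rightarrow>\<^sub>M prob_algebra borel"
    by (rule measurable_bind_prob_space2[OF measurable_const[OF D_space]]) (use inner in \<open>simp add: case_prod_beta'\<close>)
  then show ?thesis unfolding K_def[abs_def] .
qed

lemma iter_Suc: "dssgd_iter D G \<gamma> x0 (Suc t) = dssgd_iter D G \<gamma> x0 t \<bind> K"
  by (simp add: K_def[abs_def])

lemma iter_space: "dssgd_iter D G \<gamma> x0 t \<in> space (prob_algebra borel)"
proof (induction t)
  case 0
  then show ?case by (simp add: space_prob_algebra prob_space_return)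
next
  case (Suc t)
  show ?case unfolding iter_Suc space_prob_algebra
    using prob_space_bind'[OF Suc K_meas] sets_bind'[OF Suc K_meas] by simp
qed

end


context dss begin

definition Psi where
  "Psi x S = norm (x - xstar) ^ 2 - 2 * \<gamma> * (fS f s S x - fS f s S xstar)
     + \<gamma>^2 * (2 * Dab * (fS f s S x - finf) + C)"

lemma fS_gderiv': "GDERIV (fS f s S) x :> grad (fS f s S) x"
  using fS_gderiv[OF f_diff] fS_grad[OF f_diff] by metis

lemma per_S:
  assumes SL: "\<forall>h. norm (S *v h) ^ 2 \<le> LSmax D * norm h ^ 2"
  shows "(\<integral>\<^sup>+g. ennreal (norm (x - \<gamma> *\<^sub>R g - xstar) ^ 2) \<partial>G S x) \<le> ennreal (Psi x S)
         \<and> 0 \<le> Psi x S"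
proof -
  interpret Gp: prob_space "G S x" by (rule G_prob)
  define u where "u = x - xstar"
  define w where "w = grad (fS f s S) x"
  define F where "F = fS f s S x"
  define Fs where "Fs = fS f s S xstar"
  define Bnd where "Bnd = 2 * A * (F - (INF y. fS f s S y)) + B * norm w ^ 2 + C"
  have intg: "integrable (G S x) (\<lambda>g. g)" and intw: "(\<integral>g. g \<partial>G S x) = w"
    using ABC_unbiased[of S x] unfolding w_def by auto
  have sec: "(\<integral>\<^sup>+g. ennreal (norm g ^ 2) \<partial>G S x) \<le> ennreal Bnd"
    using ABC_second[of S x] unfolding Bnd_def F_def w_def .
  have infle: "finf \<le> (INF y. fS f s S y)" by (rule fS_ge)
  have Finf: "(INF y. fS f s S y) \<le> F" unfolding F_def
    by (rule cINF_lower) (auto intro!: bdd_belowI[of _ finf] simp: fS_def f_ge)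
  have Bnd_nn: "Bnd \<ge> 0" unfolding Bnd_def using A_nn B_nn C_nn Finf by simp
  have msq: "(\<lambda>g::real^'n. norm g ^ 2) \<in> borel_measurable (G S x)"
    by (subst measurable_cong_sets[OF G_sets refl]) simp
  have "(\<integral>\<^sup>+g. ennreal (norm (norm g ^ 2)) \<partial>G S x) < \<infinity>"
    using sec by (simp add: order_le_less_trans)
  then have intsq: "integrable (G S x) (\<lambda>g. norm g ^ 2)" by (rule integrableI_bounded[OF msq])
  define m2 where "m2 = (\<integral>g. norm g ^ 2 \<partial>G S x)"
  have "ennreal m2 = (\<integral>\<^sup>+g. ennreal (norm g ^ 2) \<partial>G S x)"
    unfolding m2_def by (rule nn_integral_eq_integral[symmetric]) (auto intro: intsq)
  then have "ennreal m2 \<le> ennreal Bnd" using sec by simp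
  then have m2le: "m2 \<le> Bnd" using Bnd_nn by (simp add: ennreal_le_iff)
  have expand: "norm (x - \<gamma> *\<^sub>R g - xstar) ^ 2 = norm u ^ 2 - 2 * \<gamma> * (u \<bullet> g) + \<gamma>^2 * norm g ^ 2" for g
  proof -
    have e1: "x - \<gamma> *\<^sub>R g - xstar = u - \<gamma> *\<^sub>R g" unfolding u_def by simp
    have "norm (u - \<gamma> *\<^sub>R g) ^ 2 = (u - \<gamma> *\<^sub>R g) \<bullet> (u - \<gamma> *\<^sub>R g)"
      by (rule power2_norm_eq_inner)
    moreover have "(u - \<gamma> *\<^sub>R g) \<bullet> (u - \<gamma> *\<^sub>R g) = u \<bullet> u - 2 * \<gamma> * (u \<bullet> g) + \<gamma>^2 * (g \<bullet> g)"
      by (simp add: inner_diff_left inner_diff_right inner_commute power2_eq_square algebra_simps)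
    ultimately show ?thesis unfolding e1 by (simp add: power2_norm_eq_inner)
  qed
  have inte: "integrable (G S x) (\<lambda>g. norm u ^ 2 - 2 * \<gamma> * (u \<bullet> g) + \<gamma>^2 * norm g ^ 2)"
  proof -
    have c: "integrable (G S x) (\<lambda>g. norm u ^ 2)" by (rule Gp.integrable_const)
    have i1: "integrable (G S x) (\<lambda>g. u \<bullet> g)" using intg by (rule integrable_inner_right)
    have i1': "integrable (G S x) (\<lambda>g. 2 * \<gamma> * (u \<bullet> g))" using i1 by (rule integrable_mult_right)
    have i2: "integrable (G S x) (\<lambda>g. \<gamma>^2 * norm g ^ 2)" using intsq by (rule integrable_mult_right)
    show ?thesis using c i1' i2 by (intro Bochner_Integration.integrable_add Bochner_Integration.integrable_diff)
  qed
  define V where "V = (\<integral>g. norm u ^ 2 - 2 * \<gamma> * (u \<bullet> g) + \<gamma>^2 * norm g ^ 2 \<partial>G S x)"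
  have Veq: "V = norm u ^ 2 - 2 * \<gamma> * (u \<bullet> w) + \<gamma>^2 * m2"
  proof -
    have i1: "integrable (G S x) (\<lambda>g. 2 * \<gamma> * (u \<bullet> g))" using intg by (intro integrable_mult_right integrable_inner_right)
    have i2: "integrable (G S x) (\<lambda>g. \<gamma>^2 * norm g ^ 2)" using intsq by (intro integrable_mult_right)
    have "V = (\<integral>g. norm u ^ 2 - 2 * \<gamma> * (u \<bullet> g) \<partial>G S x) + (\<integral>g. \<gamma>^2 * norm g ^ 2 \<partial>G S x)"
    proof -
      have c: "integrable (G S x) (\<lambda>g. norm u ^ 2)" by (rule Gp.integrable_const)
      have "integrable (G S x) (\<lambda>g. norm u ^ 2 - 2 * \<gamma> * (u \<bullet> g))"
        using c i1 by (rule Bochner_Integration.integrable_diff)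
      then show ?thesis unfolding V_def using i2 by (rule Bochner_Integration.integral_add)
    qed
    also have "(\<integral>g. norm u ^ 2 - 2 * \<gamma> * (u \<bullet> g) \<partial>G S x) = norm u ^ 2 - (\<integral>g. 2 * \<gamma> * (u \<bullet> g) \<partial>G S x)"
      using Gp.integrable_const i1 by (subst Bochner_Integration.integral_diff) (auto simp: Gp.prob_space)
    also have "(\<integral>g. 2 * \<gamma> * (u \<bullet> g) \<partial>G S x) = 2 * \<gamma> * (u \<bullet> w)"
      using intg intw by (simp add: integral_inner_right)
    also have "(\<integral>g. \<gamma>^2 * norm g ^ 2 \<partial>G S x) = \<gamma>^2 * m2" unfolding m2_def by simp
    finally show ?thesis .
  qed
  have V_nn: "V \<ge> 0" unfolding V_def using expand[symmetric] by (intro integral_nonneg_AE) (auto)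
  have lhs: "(\<integral>\<^sup>+g. ennreal (norm (x - \<gamma> *\<^sub>R g - xstar) ^ 2) \<partial>G S x) = ennreal V"
    unfolding V_def expand by (rule nn_integral_eq_integral[OF inte]) (auto simp: expand[symmetric])
  have gsq: "norm w ^ 2 \<le> 2 * (Lf * LSmax D) * (F - finf)"
    unfolding w_def F_def by (rule grad_sq_bound[OF f_diff f_smooth Lf_nn LS_nn _ f_ge]) (use SL in blast)
  have tan: "F + w \<bullet> (xstar - x) \<le> Fs"
    unfolding F_def Fs_def w_def by (rule convex_tangent[OF fS_convex[OF f_convex] fS_gderiv'])
  have uw: "u \<bullet> w \<ge> F - Fs"
  proof -
    have "w \<bullet> (xstar - x) = - (u \<bullet> w)" unfolding u_def by (simp add: inner_commute inner_diff_right inner_diff_left)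
    then show ?thesis using tan by simp
  qed
  have Bndle: "Bnd \<le> 2 * Dab * (F - finf) + C"
  proof -
    have "2 * A * (F - (INF y. fS f s S y)) \<le> 2 * A * (F - finf)" using A_nn infle by (simp add: mult_left_mono)
    moreover have "B * norm w ^ 2 \<le> B * (2 * (Lf * LSmax D) * (F - finf))" using B_nn gsq by (simp add: mult_left_mono)
    ultimately show ?thesis unfolding Bnd_def Dab_def by (simp add: algebra_simps)
  qed
  have "V \<le> Psi x S"
  proof -
    have "V \<le> norm u ^ 2 - 2 * \<gamma> * (u \<bullet> w) + \<gamma>^2 * Bnd" unfolding Veq using m2le by (simp add: mult_left_mono)
    also have "\<dots> \<le> norm u ^ 2 - 2 * \<gamma> * (F - Fs) + \<gamma>^2 * (2 * Dab * (F - finf) + C)"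
      using uw Bndle gamma_pos
      by (intro add_mono diff_mono mult_left_mono order_refl) auto
    finally show ?thesis unfolding Psi_def u_def F_def Fs_def .
  qed
  then show ?thesis using lhs V_nn by (simp add: ennreal_leI)
qed

end


context dss begin

lemma ftilde_ge: "finf \<le> ftilde f s D x"
proof -
  interpret P: prob_space D by (rule D_prob)
  show ?thesis unfolding ftilde_def
    by (rule P.integral_ge_const[OF fS_int]) (simp add: fS_def f_ge)
qed

lemma ftilde_inf: "(INF y. ftilde f s D y) = ftilde f s D xstar"
  by (rule cInf_eq_minimum) (auto intro: xstar_min)

lemma Psi_int: "integrable D (Psi x)" and Psi_integral:
  "(\<integral>S. Psi x S \<partial>D) = norm (x - xstar) ^ 2 - 2 * \<gamma> * (ftilde f s D x - ftilde f s D xstar)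
     + \<gamma>^2 * (2 * Dab * (ftilde f s D x - finf) + C)"
proof -
  interpret P: prob_space D by (rule D_prob)
  define \<alpha> where "\<alpha> = norm (x - xstar) ^ 2 + \<gamma>^2 * (C - 2 * Dab * finf)"
  define \<beta> where "\<beta> = 2 * \<gamma>^2 * Dab - 2 * \<gamma>"
  define \<delta> where "\<delta> = 2 * \<gamma>"
  have eq: "Psi x = (\<lambda>S. \<alpha> + (\<beta> * fS f s S x + \<delta> * fS f s S xstar))"
    unfolding Psi_def \<alpha>_def \<beta>_def \<delta>_def by (auto simp: fun_eq_iff algebra_simps)
  have i1: "integrable D (\<lambda>S. \<beta> * fS f s S x)" by (intro integrable_mult_right fS_int)
  have i2: "integrable D (\<lambda>S. \<delta> * fS f s S xstar)" by (intro integrable_mult_right fS_int)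
  have i12: "integrable D (\<lambda>S. \<beta> * fS f s S x + \<delta> * fS f s S xstar)"
    using i1 i2 by (rule Bochner_Integration.integrable_add)
  show "integrable D (Psi x)" unfolding eq using P.integrable_const i12 by (rule Bochner_Integration.integrable_add)
  have "(\<integral>S. Psi x S \<partial>D) = \<alpha> + (\<beta> * ftilde f s D x + \<delta> * ftilde f s D xstar)"
    unfolding eq ftilde_def
    by (simp add: Bochner_Integration.integral_add[OF P.integrable_const i12]
                  Bochner_Integration.integral_add[OF i1 i2] P.prob_space)
  then show "(\<integral>S. Psi x S \<partial>D) = norm (x - xstar) ^ 2 - 2 * \<gamma> * (ftilde f s D x - ftilde f s D xstar)
     + \<gamma>^2 * (2 * Dab * (ftilde f s D x - finf) + C)"
    unfolding \<alpha>_def \<beta>_def \<delta>_def by (simp add: algebra_simps)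
qed

lemma K_x_eq:
  "(\<integral>\<^sup>+y. ennreal (norm (y - xstar) ^ 2) \<partial>K x)
    = (\<integral>\<^sup>+S. (\<integral>\<^sup>+g. ennreal (norm (x - \<gamma> *\<^sub>R g - xstar) ^ 2) \<partial>G S x) \<partial>D)"
proof -
  have h: "(\<lambda>y. ennreal (norm (y - xstar) ^ 2)) \<in> borel_measurable (borel :: (real^'n) measure)"
    by measurable
  have R: "(\<lambda>g. return borel (x - \<gamma> *\<^sub>R g)) \<in> (borel :: (real^'n) measure) \<rightarrow>\<^sub>M prob_algebra borel"
    by measurable
  have N: "(\<lambda>S. G S x \<bind> (\<lambda>g. return borel (x - \<gamma> *\<^sub>R g))) \<in> D \<rightarrow>\<^sub>M prob_algebra borel"
    by (rule measurable_bind_prob_space[OF G_x_meas R])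
  have inner: "(\<integral>\<^sup>+y. ennreal (norm (y - xstar) ^ 2) \<partial>(G S x \<bind> (\<lambda>g. return borel (x - \<gamma> *\<^sub>R g))))
      = (\<integral>\<^sup>+g. ennreal (norm (x - \<gamma> *\<^sub>R g - xstar) ^ 2) \<partial>G S x)" for S
  proof -
    have R': "(\<lambda>g. return borel (x - \<gamma> *\<^sub>R g)) \<in> G S x \<rightarrow>\<^sub>M subprob_algebra borel"
      using measurable_prob_algebraD[OF R] by (subst measurable_cong_sets[OF G_sets refl])
    show ?thesis
      by (simp add: nn_integral_bind[OF h R'] nn_integral_return[OF _ h])
  qed
  show ?thesis unfolding K_def
    by (simp add: nn_integral_bind[OF h measurable_prob_algebraD[OF N]] inner)
qed

lemma per_x:
  "(\<integral>\<^sup>+y. ennreal (norm (y - xstar) ^ 2) \<partial>K x) + ennreal (\<gamma> * (ftilde f s D x - ftilde f s D xstar))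
    \<le> ennreal (norm (x - xstar) ^ 2) + ennreal (\<gamma>^2 * (2 * Dab * (ftilde f s D xstar - finf) + C))"
proof -
  interpret P: prob_space D by (rule D_prob)
  define I where "I = (\<integral>S. Psi x S \<partial>D)"
  have AEp: "AE S in D. (\<integral>\<^sup>+g. ennreal (norm (x - \<gamma> *\<^sub>R g - xstar) ^ 2) \<partial>G S x) \<le> ennreal (Psi x S)
         \<and> 0 \<le> Psi x S"
    using AE_SL by (rule eventually_mono) (rule per_S)
  have "(\<integral>\<^sup>+y. ennreal (norm (y - xstar) ^ 2) \<partial>K x) \<le> (\<integral>\<^sup>+S. ennreal (Psi x S) \<partial>D)"
    unfolding K_x_eq using AEp by (intro nn_integral_mono_AE) (auto elim: eventually_mono)
  also have "\<dots> = ennreal I" unfolding I_def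
    using Psi_int AEp by (intro nn_integral_eq_integral) (auto elim: eventually_mono)
  finally have k: "(\<integral>\<^sup>+y. ennreal (norm (y - xstar) ^ 2) \<partial>K x) \<le> ennreal I" .
  have I_nn: "I \<ge> 0" unfolding I_def using AEp by (intro integral_nonneg_AE) (auto elim: eventually_mono)
  define d where "d = ftilde f s D x - ftilde f s D xstar"
  define \<Delta> where "\<Delta> = ftilde f s D xstar - finf"
  have d0: "d \<ge> 0" unfolding d_def using xstar_min[of x] by simp
  have D0: "\<Delta> \<ge> 0" unfolding \<Delta>_def using ftilde_ge by simp
  have Ieq: "I = norm (x - xstar) ^ 2 - 2 * \<gamma> * d + \<gamma>^2 * (2 * Dab * (d + \<Delta>) + C)"
    unfolding I_def Psi_integral d_def \<Delta>_def by simp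
  have key: "2 * \<gamma>^2 * Dab * d \<le> \<gamma> * d"
  proof -
    have "2 * \<gamma> * Dab \<le> 1" using gamma_le unfolding Dab_def .
    then have "(2 * \<gamma> * Dab) * (\<gamma> * d) \<le> 1 * (\<gamma> * d)" using d0 gamma_pos by (intro mult_right_mono) auto
    then show ?thesis by (simp add: power2_eq_square algebra_simps)
  qed
  have ineq: "I + \<gamma> * d \<le> norm (x - xstar) ^ 2 + \<gamma>^2 * (2 * Dab * \<Delta> + C)"
    unfolding Ieq using key by (simp add: algebra_simps)
  have E0: "0 \<le> \<gamma>^2 * (2 * Dab * \<Delta> + C)" using Dab_nn D0 C_nn by simp
  have gd: "0 \<le> \<gamma> * d" using gamma_pos d0 by simp
  have "(\<integral>\<^sup>+y. ennreal (norm (y - xstar) ^ 2) \<partial>K x) + ennreal (\<gamma> * d) \<le> ennreal I + ennreal (\<gamma> * d)"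
    using k by (rule add_right_mono)
  also have "\<dots> = ennreal (I + \<gamma> * d)" using I_nn gd by (simp add: ennreal_plus)
  also have "\<dots> \<le> ennreal (norm (x - xstar) ^ 2 + \<gamma>^2 * (2 * Dab * \<Delta> + C))" using ineq by (rule ennreal_leI)
  also have "\<dots> = ennreal (norm (x - xstar) ^ 2) + ennreal (\<gamma>^2 * (2 * Dab * \<Delta> + C))"
    using E0 by (simp add: ennreal_plus)
  finally show ?thesis unfolding d_def \<Delta>_def .
qed

end


context dss begin

definition rr where "rr x0 n = (\<integral>\<^sup>+y. ennreal (norm (y - xstar) ^ 2) \<partial>dssgd_iter D G \<gamma> x0 n)"
definition aa where "aa x0 n = (\<integral>\<^sup>+x. ennreal (ftilde f s D x - (INF y. ftilde f s D y)) \<partial>dssgd_iter D G \<gamma> x0 n)"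
definition E0 where "E0 = \<gamma>^2 * (2 * Dab * (ftilde f s D xstar - finf) + C)"

lemma iter_sets: "sets (dssgd_iter D G \<gamma> x0 n) = sets borel"
  using iter_space[of x0 n] by (simp add: space_prob_algebra)

lemma iter_prob: "prob_space (dssgd_iter D G \<gamma> x0 n)"
  using iter_space[of x0 n] by (simp add: space_prob_algebra)

lemma step: "rr x0 (Suc n) + ennreal \<gamma> * aa x0 n \<le> rr x0 n + ennreal E0"
proof -
  define M where "M = dssgd_iter D G \<gamma> x0 n"
  interpret P: prob_space M unfolding M_def by (rule iter_prob)
  have Msets: "sets M = sets borel" unfolding M_def by (rule iter_sets)
  have h: "(\<lambda>y. ennreal (norm (y - xstar) ^ 2)) \<in> borel_measurable (borel :: (real^'n) measure)"
    by measurable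
  have KM: "K \<in> M \<rightarrow>\<^sub>M subprob_algebra borel"
    using measurable_prob_algebraD[OF K_meas] by (subst measurable_cong_sets[OF Msets refl])
  have r1: "rr x0 (Suc n) = (\<integral>\<^sup>+x. (\<integral>\<^sup>+y. ennreal (norm (y - xstar) ^ 2) \<partial>K x) \<partial>M)"
    unfolding rr_def iter_Suc M_def[symmetric] by (rule nn_integral_bind[OF h KM])
  have mK: "(\<lambda>x. \<integral>\<^sup>+y. ennreal (norm (y - xstar) ^ 2) \<partial>K x) \<in> borel_measurable M"
    using measurable_compose[OF KM nn_integral_measurable_subprob_algebra[OF h]] by simp
  have md: "(\<lambda>x. ennreal (\<gamma> * (ftilde f s D x - ftilde f s D xstar))) \<in> borel_measurable M"
  proof -
    have "(\<lambda>x. ennreal (\<gamma> * (ftilde f s D x - ftilde f s D xstar))) \<in> borel_measurable borel"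
      using ftilde_meas by measurable
    then show ?thesis by (subst measurable_cong_sets[OF Msets refl])
  qed
  have ma: "(\<lambda>x. ennreal (ftilde f s D x - ftilde f s D xstar)) \<in> borel_measurable M"
  proof -
    have "(\<lambda>x. ennreal (ftilde f s D x - ftilde f s D xstar)) \<in> borel_measurable borel"
      using ftilde_meas by measurable
    then show ?thesis by (subst measurable_cong_sets[OF Msets refl])
  qed
  have a1: "ennreal \<gamma> * aa x0 n = (\<integral>\<^sup>+x. ennreal (\<gamma> * (ftilde f s D x - ftilde f s D xstar)) \<partial>M)"
  proof -
    have "ennreal \<gamma> * aa x0 n = (\<integral>\<^sup>+x. ennreal \<gamma> * ennreal (ftilde f s D x - ftilde f s D xstar) \<partial>M)"
      unfolding aa_def ftilde_inf M_def[symmetric] by (rule nn_integral_cmult[OF ma, symmetric])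
    also have "\<dots> = (\<integral>\<^sup>+x. ennreal (\<gamma> * (ftilde f s D x - ftilde f s D xstar)) \<partial>M)"
    proof (intro nn_integral_cong)
      fix x
      have "0 \<le> ftilde f s D x - ftilde f s D xstar" using xstar_min[of x] by simp
      then show "ennreal \<gamma> * ennreal (ftilde f s D x - ftilde f s D xstar) = ennreal (\<gamma> * (ftilde f s D x - ftilde f s D xstar))"
        using gamma_pos by (simp add: ennreal_mult)
    qed
    finally show ?thesis .
  qed
  have "rr x0 (Suc n) + ennreal \<gamma> * aa x0 n
      = (\<integral>\<^sup>+x. (\<integral>\<^sup>+y. ennreal (norm (y - xstar) ^ 2) \<partial>K x) + ennreal (\<gamma> * (ftilde f s D x - ftilde f s D xstar)) \<partial>M)"
    unfolding r1 a1 by (rule nn_integral_add[OF mK md, symmetric])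
  also have "\<dots> \<le> (\<integral>\<^sup>+x. ennreal (norm (x - xstar) ^ 2) + ennreal E0 \<partial>M)"
    unfolding E0_def by (intro nn_integral_mono per_x)
  also have "\<dots> = (\<integral>\<^sup>+x. ennreal (norm (x - xstar) ^ 2) \<partial>M) + (\<integral>\<^sup>+x. ennreal E0 \<partial>M)"
  proof (rule nn_integral_add)
    have "(\<lambda>x. ennreal (norm (x - xstar) ^ 2)) \<in> borel_measurable (borel :: (real^'n) measure)" by measurable
    then show "(\<lambda>x. ennreal (norm (x - xstar) ^ 2)) \<in> borel_measurable M"
      by (subst measurable_cong_sets[OF Msets refl])
  qed simp
  also have "\<dots> = rr x0 n + ennreal E0"
    unfolding rr_def M_def[symmetric] by (simp add: P.emeasure_space_1)
  finally show ?thesis .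
qed

lemma tele: "rr x0 n + ennreal \<gamma> * (\<Sum>t<n. aa x0 t) \<le> ennreal (norm (x0 - xstar) ^ 2) + of_nat n * ennreal E0"
proof (induction n)
  case 0
  have h: "(\<lambda>y. ennreal (norm (y - xstar) ^ 2)) \<in> borel_measurable (borel :: (real^'n) measure)"
    by measurable
  show ?case by (simp add: rr_def nn_integral_return[OF _ h])
next
  case (Suc n)
  have "rr x0 (Suc n) + ennreal \<gamma> * (\<Sum>t<Suc n. aa x0 t)
      = (rr x0 (Suc n) + ennreal \<gamma> * aa x0 n) + ennreal \<gamma> * (\<Sum>t<n. aa x0 t)"
    by (simp add: distrib_left add.assoc add.commute add.left_commute)
  also have "\<dots> \<le> (rr x0 n + ennreal E0) + ennreal \<gamma> * (\<Sum>t<n. aa x0 t)"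
    by (intro add_right_mono step)
  also have "\<dots> = (rr x0 n + ennreal \<gamma> * (\<Sum>t<n. aa x0 t)) + ennreal E0"
    by (simp add: add.assoc add.commute add.left_commute)
  also have "\<dots> \<le> (ennreal (norm (x0 - xstar) ^ 2) + of_nat n * ennreal E0) + ennreal E0"
    by (intro add_right_mono Suc.IH)
  also have "\<dots> = ennreal (norm (x0 - xstar) ^ 2) + of_nat (Suc n) * ennreal E0"
    by (simp add: distrib_right add.assoc)
  finally show ?case .
qed

end


context dss begin

lemma final:
  assumes T: "T \<ge> 1"
  shows "(\<integral>\<^sup>+x. ennreal (ftilde f s D x - (INF y. ftilde f s D y)) \<partial>dssgd_avg D G \<gamma> x0 T)
     \<le> ennreal (norm (x0 - xstar) ^ 2 / (\<gamma> * real T)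
          + \<gamma> * (2 * ((INF y. ftilde f s D y) - (INF y. f y)) * (A + B * Lf * LSmax D) + C))"
proof -
  define \<Sigma> where "\<Sigma> = (\<Sum>t<T. aa x0 t)"
  have h: "(\<lambda>x. ennreal (ftilde f s D x - (INF y. ftilde f s D y))) \<in> borel_measurable borel"
    using ftilde_meas by measurable
  have N: "(\<lambda>t. dssgd_iter D G \<gamma> x0 t) \<in> measure_pmf (pmf_of_set {..<T}) \<rightarrow>\<^sub>M subprob_algebra borel"
    using iter_space[of x0] by (auto simp: measurable_pmf_measure1 space_prob_algebra space_subprob_algebra
        intro: prob_space_imp_subprob_space)
  have ne: "{..<T} \<noteq> {}" using T by (auto simp: lessThan_empty_iff)
  have lhs: "(\<integral>\<^sup>+x. ennreal (ftilde f s D x - (INF y. ftilde f s D y)) \<partial>dssgd_avg D G \<gamma> x0 T)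
      = \<Sigma> / of_nat T"
    unfolding dssgd_avg_def nn_integral_bind[OF h N] \<Sigma>_def aa_def
    by (subst nn_integral_pmf_of_set[OF ne]) auto
  define R where "R = norm (x0 - xstar) ^ 2 + real T * E0"
  have E0_nn: "E0 \<ge> 0" unfolding E0_def using Dab_nn ftilde_ge[of xstar] C_nn by simp
  have R_nn: "R \<ge> 0" unfolding R_def using E0_nn by simp
  have "rr x0 T + ennreal \<gamma> * \<Sigma> \<le> ennreal (norm (x0 - xstar) ^ 2) + of_nat T * ennreal E0"
    unfolding \<Sigma>_def by (rule tele)
  also have "\<dots> = ennreal R" unfolding R_def using E0_nn
    by (simp add: ennreal_plus ennreal_mult ennreal_of_nat_eq_real_of_nat)
  finally have gs: "ennreal \<gamma> * \<Sigma> \<le> ennreal R"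
    by (meson add_increasing order_trans zero_le order_refl)
  have "\<Sigma> \<noteq> \<infinity>"
  proof
    assume "\<Sigma> = \<infinity>"
    then have "ennreal \<gamma> * \<Sigma> = \<infinity>" using gamma_pos by (simp add: ennreal_mult_top)
    then show False using gs by (simp add: top_unique)
  qed
  then obtain \<sigma> where \<sigma>: "\<Sigma> = ennreal \<sigma>" "0 \<le> \<sigma>" by (cases \<Sigma> rule: ennreal_cases) auto
  have "ennreal (\<gamma> * \<sigma>) \<le> ennreal R" using gs gamma_pos \<sigma> by (simp add: ennreal_mult)
  then have gsr: "\<gamma> * \<sigma> \<le> R" using R_nn by (simp add: ennreal_le_iff)
  have Tpos: "real T > 0" using T by simp
  have "\<Sigma> / of_nat T = ennreal (\<sigma> / real T)"
    unfolding \<sigma>(1) using \<sigma>(2) Tpos by (simp add: ennreal_of_nat_eq_real_of_nat divide_ennreal)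
  also have "\<dots> \<le> ennreal (norm (x0 - xstar) ^ 2 / (\<gamma> * real T)
          + \<gamma> * (2 * ((INF y. ftilde f s D y) - (INF y. f y)) * (A + B * Lf * LSmax D) + C))"
  proof (rule ennreal_leI)
    have "\<sigma> / real T \<le> R / (\<gamma> * real T)"
      using gsr gamma_pos Tpos by (simp add: field_simps)
    also have "R / (\<gamma> * real T) = norm (x0 - xstar) ^ 2 / (\<gamma> * real T) + E0 / \<gamma>"
      unfolding R_def using gamma_pos Tpos by (simp add: field_simps)
    also have "E0 / \<gamma> = \<gamma> * (2 * ((INF y. ftilde f s D y) - (INF y. f y)) * (A + B * Lf * LSmax D) + C)"
    proof -
      have "E0 = \<gamma> * (\<gamma> * (2 * Dab * (ftilde f s D xstar - finf) + C))"
        unfolding E0_def by (simp add: power2_eq_square)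
      then have "E0 / \<gamma> = \<gamma> * (2 * Dab * (ftilde f s D xstar - finf) + C)" using gamma_pos by simp
      then show ?thesis unfolding ftilde_inf finf_def Dab_def by (simp add: algebra_simps)
    qed
    finally show "\<sigma> / real T \<le> norm (x0 - xstar) ^ 2 / (\<gamma> * real T)
          + \<gamma> * (2 * ((INF y. ftilde f s D y) - (INF y. f y)) * (A + B * Lf * LSmax D) + C)" .
  qed
  finally show ?thesis unfolding lhs .
qed

end

theorem mainTheorem12:
  fixes f :: "real^'n \<Rightarrow> real"
    and s x0 xstar :: "real^'n"
    and D :: "(real^'n^'n) measure"
    and G :: "real^'n^'n \<Rightarrow> real^'n \<Rightarrow> (real^'n) measure"
    and Lf A B C \<gamma> :: real
    and T :: nat
  assumes D_prob: "prob_space D"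
    and D_sets: "sets D = sets borel"
    and D_mean: "integrable D (\<lambda>S. S)" "(\<integral>S. S \<partial>D) = mat 1"
    and D_second: "integrable D (\<lambda>S. transpose S ** S)"
    and LSmax_fin: "\<exists>L. AE S in D. lambda_max (transpose S ** S) \<le> L"
    and f_convex: "convex_on UNIV f"
    and f_diff: "\<And>x. f differentiable (at x)"
    and f_smooth: "\<And>x h. f (x + h) \<le> f x + grad f x \<bullet> h + Lf / 2 * norm h ^ 2"
    and f_bdd: "bdd_below (range f)"
    and xstar_min: "\<And>x. ftilde f s D xstar \<le> ftilde f s D x"
    and G_prob: "\<And>S x. prob_space (G S x)"
    and G_sets: "\<And>S x. sets (G S x) = sets borel"
    and G_meas: "(\<lambda>(S, x). G S x) \<in> borel \<Otimes>\<^sub>M borel \<rightarrow>\<^sub>M subprob_algebra borel"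
    and ABC_unbiased: "\<And>S x. integrable (G S x) (\<lambda>g. g) \<and>
                          (\<integral>g. g \<partial>G S x) = grad (fS f s S) x"
    and ABC_second: "\<And>S x. (\<integral>\<^sup>+g. ennreal (norm g ^ 2) \<partial>G S x)
          \<le> ennreal (2 * A * (fS f s S x - (INF y. fS f s S y))
                     + B * norm (grad (fS f s S) x) ^ 2 + C)"
    and A_nn: "A \<ge> 0" and B_nn: "B \<ge> 0" and C_nn: "C \<ge> 0"
    and gamma_pos: "\<gamma> > 0"
    and gamma_le: "2 * \<gamma> * (A + B * Lf * LSmax D) \<le> 1"
    and T_pos: "T \<ge> 1"
  shows "(\<integral>\<^sup>+x. ennreal (ftilde f s D x - (INF y. ftilde f s D y)) \<partial>dssgd_avg D G \<gamma> x0 T)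
     \<le> ennreal (norm (x0 - xstar) ^ 2 / (\<gamma> * real T)
          + \<gamma> * (2 * ((INF y. ftilde f s D y) - (INF y. f y)) * (A + B * Lf * LSmax D) + C))"
  proof -
  interpret dss f s xstar D G Lf A B C \<gamma>
    by (rule dss.intro[OF D_prob D_sets LSmax_fin f_convex f_diff f_smooth f_bdd xstar_min
          G_prob G_sets G_meas ABC_unbiased ABC_second A_nn B_nn C_nn gamma_pos gamma_le])
  show ?thesis by (rule final[OF T_pos])
qed

end
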